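(* The continued fraction \[ 8+\cfrac{8}{11-\cfrac{9}{24-\cfrac{25}{36-\cfrac{49}{48-\cdots}}}}, \] i.e. with $a(0)=8$, $a(1)=11$, $a(n)=12n$ for $n\ge2$, $b(0)=8$, $b(n)=-(2n+1)^2$ for $n\ge1$, converges to $\big(\Gamma(1/4)/\Gamma(3/4)\big)^2$. Moreover, with $p(n)/q(n)$ its $n$-th convergent, as $n\to\infty$ \[ \Big(\frac{\Gamma(1/4)}{\Gamma(3/4)}\Big)^2-\frac{p(n)}{q(n)}\sim\frac{4(\Gamma(1/4)/\Gamma(3/4))^2}{(1+\sqrt2)^{4n+4}}. \]
   Context: For sequences $a(n),b(n)$, the continued fraction is $a(0)+\cfrac{b(0)}{a(1)+\cfrac{b(1)}{a(2)+\cdots}}$ and its $n$-th convergent $p(n)/q(n)$ is the truncation ending with $b(n-1)/a(n)$. *)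

theory Defs
  imports "HOL-Analysis.Analysis"
begin

text \<open>The n-th convergent of the continued fraction
  a(0) + b(0)/(a(1) + b(1)/(a(2) + ...)), i.e. the truncation ending with b(n-1)/a(n).\<close>
fun cf_convergent :: "(nat \<Rightarrow> real) \<Rightarrow> (nat \<Rightarrow> real) \<Rightarrow> nat \<Rightarrow> real" where
  "cf_convergent a b 0 = a 0"
| "cf_convergent a b (Suc n) = a 0 + b 0 / cf_convergent (\<lambda>i. a (Suc i)) (\<lambda>i. b (Suc i)) n"

definition cf_a :: "nat \<Rightarrow> real" where
  "cf_a n = (if n = 0 then 8 else if n = 1 then 11 else 12 * real n)"

definition cf_b :: "nat \<Rightarrow> real" where
  "cf_b n = (if n = 0 then 8 else - ((2 * real n + 1) ^ 2))"

end

theory Submission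
  imports Defs "HOL-Real_Asymp.Real_Asymp"
begin


fun PP :: "(nat \<Rightarrow> real) \<Rightarrow> (nat \<Rightarrow> real) \<Rightarrow> nat \<Rightarrow> real" where
  "PP a b 0 = a 0"
| "PP a b (Suc 0) = a 1 * a 0 + b 0"
| "PP a b (Suc (Suc n)) = a (n+2) * PP a b (Suc n) + b (n+1) * PP a b n"

fun QQ :: "(nat \<Rightarrow> real) \<Rightarrow> (nat \<Rightarrow> real) \<Rightarrow> nat \<Rightarrow> real" where
  "QQ a b 0 = 1"
| "QQ a b (Suc 0) = a 1"
| "QQ a b (Suc (Suc n)) = a (n+2) * QQ a b (Suc n) + b (n+1) * QQ a b n"

lemma PQ_shift:
  "PP a b (Suc n) = a 0 * PP (\<lambda>i. a (Suc i)) (\<lambda>i. b (Suc i)) n + b 0 * QQ (\<lambda>i. a (Suc i)) (\<lambda>i. b (Suc i)) n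
   \<and> QQ a b (Suc n) = PP (\<lambda>i. a (Suc i)) (\<lambda>i. b (Suc i)) n"
proof (induction n rule: less_induct)
  case (less n)
  show ?case
  proof (cases n)
    case 0 then show ?thesis by (simp add: algebra_simps)
  next
    case (Suc m)
    show ?thesis
    proof (cases m)
      case 0 then show ?thesis using Suc by (simp add: algebra_simps numeral_2_eq_2)
    next
      case (Suc k)
      have h1: "PP a b (Suc (Suc k)) = a 0 * PP (\<lambda>i. a (Suc i)) (\<lambda>i. b (Suc i)) (Suc k) + b 0 * QQ (\<lambda>i. a (Suc i)) (\<lambda>i. b (Suc i)) (Suc k)
   \<and> QQ a b (Suc (Suc k)) = PP (\<lambda>i. a (Suc i)) (\<lambda>i. b (Suc i)) (Suc k)"
        using less[of "Suc k"] \<open>n = Suc m\<close> Suc by simp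
      have h2: "PP a b (Suc k) = a 0 * PP (\<lambda>i. a (Suc i)) (\<lambda>i. b (Suc i)) k + b 0 * QQ (\<lambda>i. a (Suc i)) (\<lambda>i. b (Suc i)) k
   \<and> QQ a b (Suc k) = PP (\<lambda>i. a (Suc i)) (\<lambda>i. b (Suc i)) k"
        using less[of k] \<open>n = Suc m\<close> Suc by simp
      show ?thesis using h1 h2 \<open>n = Suc m\<close> Suc
        by (simp add: algebra_simps)
    qed
  qed
qed

definition ta :: "nat \<Rightarrow> nat \<Rightarrow> real" where "ta j = (\<lambda>i. cf_a (i + j))"
definition tb :: "nat \<Rightarrow> nat \<Rightarrow> real" where "tb j = (\<lambda>i. cf_b (i + j))"

lemma ta_shift: "(\<lambda>i. ta j (Suc i)) = ta (Suc j)" "(\<lambda>i. tb j (Suc i)) = tb (Suc j)"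
  by (auto simp: ta_def tb_def)

lemma tail_pos:
  assumes "j \<ge> 1"
  shows "PP (ta j) (tb j) n > 0 \<and> PP (ta j) (tb j) (Suc n) \<ge> (2 * real (n + j) + 3) * PP (ta j) (tb j) n"
proof (induction n rule: less_induct)
  case (less n)
  show ?case
  proof (cases n)
    case 0
    have a0: "ta j 0 \<ge> 11 * real j" using assms by (auto simp: ta_def cf_a_def)
    have a1: "ta j 1 = 12 * (real j + 1)" using assms by (auto simp: ta_def cf_a_def)
    have b0: "tb j 0 = - ((2 * real j + 1)^2)" using assms by (auto simp: tb_def cf_b_def)
    have j1: "real j \<ge> 1" using assms by simp
    have jj: "real j * real j \<ge> 0" by simp
    have e1: "(2 * real j + 1)^2 = 4 * (real j * real j) + 4 * real j + 1" by (simp add: power2_eq_square algebra_simps)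
    have e2: "(10 * real j + 9) * (11 * real j) = 110 * (real j * real j) + 99 * real j" by (simp add: algebra_simps)
    have "(2 * real j + 1)^2 \<le> (10 * real j + 9) * (11 * real j)" unfolding e1 e2 using j1 jj by linarith
    also have "\<dots> \<le> (10 * real j + 9) * ta j 0" using a0 by (intro mult_left_mono) auto
    finally have "(2 * real j + 1)^2 \<le> (10 * real j + 9) * ta j 0" .
    then show ?thesis using 0 a0 a1 b0 assms by (simp add: algebra_simps)
  next
    case (Suc m)
    have IH: "PP (ta j) (tb j) m > 0 \<and> PP (ta j) (tb j) (Suc m) \<ge> (2 * real (m + j) + 3) * PP (ta j) (tb j) m"
      using less Suc by simp
    have a: "ta j (m+2) = 12 * (real m + real j + 2)" using assms by (auto simp: ta_def cf_a_def)
    have b: "tb j (m+1) = - ((2 * real m + 2 * real j + 3)^2)" using assms by (auto simp: tb_def cf_b_def algebra_simps)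
    define x where "x = PP (ta j) (tb j) m"
    define y where "y = PP (ta j) (tb j) (Suc m)"
    have x: "x > 0" and y: "y \<ge> (2 * real m + 2 * real j + 3) * x" using IH by (auto simp: x_def y_def)
    have ypos: "y > 0" using x y by (smt (verit) mult_pos_pos of_nat_0_le_iff)
    have "(2 * real m + 2 * real j + 3)^2 * x \<le> (2 * real m + 2 * real j + 3) * y"
      using y by (simp add: power2_eq_square mult.assoc mult_left_mono)
    then have "PP (ta j) (tb j) (Suc (Suc m)) \<ge> (12 * (real m + real j + 2) - (2 * real m + 2 * real j + 3)) * y"
      using a b by (simp add: x_def[symmetric] y_def[symmetric] algebra_simps)
    moreover have "(12 * (real m + real j + 2) - (2 * real m + 2 * real j + 3)) * y \<ge> (2 * real (Suc m + j) + 3) * y"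
      using ypos by (intro mult_right_mono) auto
    ultimately have "PP (ta j) (tb j) (Suc (Suc m)) \<ge> (2 * real (Suc m + j) + 3) * y" by linarith
    then show ?thesis using ypos Suc by (simp add: y_def)
  qed
qed

lemma tail_cf:
  assumes "j \<ge> 1"
  shows "cf_convergent (ta j) (tb j) n = PP (ta j) (tb j) n / QQ (ta j) (tb j) n"
  using assms
proof (induction n arbitrary: j)
  case 0 then show ?case by simp
next
  case (Suc n)
  have IH: "cf_convergent (ta (Suc j)) (tb (Suc j)) n = PP (ta (Suc j)) (tb (Suc j)) n / QQ (ta (Suc j)) (tb (Suc j)) n"
    using Suc by simp
  have pos: "PP (ta (Suc j)) (tb (Suc j)) n > 0" using tail_pos[of "Suc j" n] by simp
  show ?case using IH pos PQ_shift[of "ta j" "tb j" n]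
    by (simp add: ta_shift field_simps)
qed

definition pp where "pp n = PP cf_a cf_b n"
definition qq where "qq n = QQ cf_a cf_b n"

lemma ta0: "ta 0 = cf_a" "tb 0 = cf_b" by (auto simp: ta_def tb_def)

lemma qq_pos: "qq n > 0"
proof (cases n)
  case 0 then show ?thesis by (simp add: qq_def)
next
  case (Suc m)
  then show ?thesis using PQ_shift[of cf_a cf_b m] tail_pos[of 1 m] ta_shift[of 0] ta0
    by (simp add: qq_def)
qed

lemma cf_pq: "cf_convergent cf_a cf_b n = pp n / qq n"
proof (cases n)
  case 0 then show ?thesis by (simp add: pp_def qq_def)
next
  case (Suc m)
  have "cf_convergent cf_a cf_b (Suc m) = cf_a 0 + cf_b 0 / cf_convergent (ta 1) (tb 1) m"
    using ta_shift[of 0] ta0 by simp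
  also have "\<dots> = pp (Suc m) / qq (Suc m)"
    using tail_cf[of 1 m] tail_pos[of 1 m] PQ_shift[of cf_a cf_b m] ta_shift[of 0] ta0
    by (simp add: pp_def qq_def field_simps)
  finally show ?thesis using Suc by simp
qed

lemma pp_rec: "pp (Suc (Suc n)) = 12 * (real n + 2) * pp (Suc n) - (2 * real n + 3)^2 * pp n"
  by (simp add: pp_def cf_a_def cf_b_def algebra_simps)
lemma qq_rec: "qq (Suc (Suc n)) = 12 * (real n + 2) * qq (Suc n) - (2 * real n + 3)^2 * qq n"
  by (simp add: qq_def cf_a_def cf_b_def algebra_simps)
lemma pq01: "pp 0 = 8" "qq 0 = 1" "pp 1 = 96" "qq 1 = 11" "pp (Suc 0) = 96" "qq (Suc 0) = 11"
  by (simp_all add: pp_def qq_def cf_a_def cf_b_def)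

definition Od :: "nat \<Rightarrow> real" where "Od n = (\<Prod>j=1..n. 2 * real j + 1)"

lemma Od_Suc: "Od (Suc n) = Od n * (2 * real n + 3)"
  unfolding Od_def by (subst prod.cl_ivl_Suc) (simp add: algebra_simps)
lemma Od_pos: "Od n > 0" unfolding Od_def
  by (rule prod_pos) (auto simp: add_pos_nonneg)
lemma Od0: "Od 0 = 1" by (simp add: Od_def)

lemma casorati: "pp (Suc n) * qq n - pp n * qq (Suc n) = 8 * Od n ^ 2"
proof (induction n)
  case 0 then show ?case by (simp add: pq01 Od_def)
next
  case (Suc n)
  have "pp (Suc (Suc n)) * qq (Suc n) - pp (Suc n) * qq (Suc (Suc n)) = (2*real n+3)^2 * (pp (Suc n) * qq n - pp n * qq (Suc n))"
    by (simp add: pp_rec qq_rec algebra_simps)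
  also have "\<dots> = (2*real n+3)^2 * (8 * Od n ^ 2)" using Suc.IH by simp
  also have "\<dots> = 8 * Od (Suc n) ^ 2" by (simp add: Od_Suc power_mult_distrib)
  finally show ?case .
qed


lemma ftc_zero:
  fixes F f :: "real \<Rightarrow> real"
  assumes "a \<le> b" "\<And>x. (F has_real_derivative f x) (at x)" "F a = 0" "F b = 0"
  shows "(f has_integral 0) {a..b}"
proof -
  have "(f has_integral (F b - F a)) {a..b}"
    using assms(1) by (intro fundamental_theorem_of_calculus)
      (auto simp: has_real_derivative_iff_has_vector_derivative[symmetric]
            intro: has_field_derivative_at_within assms(2))
  then show ?thesis using assms by simp
qed

definition Cw :: "nat \<Rightarrow> real" where "Cw m = integral {0..pi/2} (\<lambda>t. cos t ^ m)"

lemma Cw_int: "((\<lambda>t. cos t ^ m) has_integral Cw m) {0..pi/2}"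
  unfolding Cw_def by (intro integrable_integral integrable_continuous_interval continuous_intros)

lemma trig_aux:
  fixes c s k p :: real
  assumes h: "c * c + s * s = 1"
  shows "(1 + k) * (- s * 1 * p) * s + c * 1 * (c * p) = (k + 2) * (c * (c * p)) - (k + 1) * p"
proof -
  have "(1 + k) * (- s * 1 * p) * s + c * 1 * (c * p) - ((k + 2) * (c * (c * p)) - (k + 1) * p) = (1 + k) * p * (1 - (c * c + s * s))"
    by (simp add: algebra_simps)
  then show ?thesis using h by simp
qed

lemma Cw_rec: "Cw (Suc (Suc m)) = (real m + 1) / (real m + 2) * Cw m"
proof -
  have d: "((\<lambda>t. cos t ^ (Suc m) * sin t) has_real_derivative
           ((real m + 2) * cos x ^ (Suc (Suc m)) - (real m + 1) * cos x ^ m)) (at x)" for x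
    apply (rule derivative_eq_intros refl)+
    apply (simp only: power_Suc diff_Suc_Suc diff_zero of_nat_Suc)
    apply (rule trig_aux[OF sin_cos_squared_add3])
    done
  have "((\<lambda>x. (real m + 2) * cos x ^ (Suc (Suc m)) - (real m + 1) * cos x ^ m) has_integral 0) {0..pi/2}"
    by (rule ftc_zero[OF _ d]) auto
  moreover have "((\<lambda>x. (real m + 2) * cos x ^ (Suc (Suc m)) - (real m + 1) * cos x ^ m) has_integral
      ((real m + 2) * Cw (Suc (Suc m)) - (real m + 1) * Cw m)) {0..pi/2}"
    by (intro has_integral_diff has_integral_mult_right Cw_int)
  ultimately have "(real m + 2) * Cw (Suc (Suc m)) - (real m + 1) * Cw m = 0"
    using has_integral_unique by blast
  then show ?thesis by (simp add: field_simps)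
qed

lemma Cw0: "Cw 0 = pi/2"
proof -
  have "((\<lambda>t. 1) has_integral (pi/2)) {0..pi/2}" using has_integral_const_real[of "1::real" 0 "pi/2"] by simp
  then have "((\<lambda>t. cos t ^ 0) has_integral (pi/2)) {0..pi/2}" by simp
  from has_integral_unique[OF Cw_int this] show ?thesis .
qed

lemma Cw1: "Cw (Suc 0) = 1"
proof -
  have "((\<lambda>t. cos t) has_integral (sin (pi/2) - sin 0)) {0..pi/2}"
    by (intro fundamental_theorem_of_calculus)
       (auto simp: has_real_derivative_iff_has_vector_derivative[symmetric] intro!: derivative_eq_intros)
  then show ?thesis using Cw_int[of "Suc 0"] by (simp add: has_integral_unique)
qed

lemma Cw_pos: "Cw m > 0"
proof (induction m rule: less_induct)
  case (less m)
  show ?case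
  proof (cases m)
    case 0 then show ?thesis by (simp add: Cw0)
  next
    case (Suc k)
    then show ?thesis
    proof (cases k)
      case 0 then show ?thesis using Suc by (simp add: Cw1)
    next
      case (Suc j)
      then show ?thesis using less[of j] \<open>m = Suc k\<close> by (simp add: Cw_rec)
    qed
  qed
qed

lemma Cw_mono: "Cw (Suc m) \<le> Cw m"
proof -
  have "integral {0..pi/2} (\<lambda>t. cos t ^ Suc m) \<le> integral {0..pi/2} (\<lambda>t. cos t ^ m)"
  proof (rule integral_le)
    show "(\<lambda>t. cos t ^ Suc m) integrable_on {0..pi/2}" "(\<lambda>t. cos t ^ m) integrable_on {0..pi/2}"
      using Cw_int by blast+
    fix x assume x: "x \<in> {0..pi/2}"
    then have "0 \<le> cos x" "cos x \<le> 1" by (auto intro: cos_ge_zero)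
    then show "cos x ^ Suc m \<le> cos x ^ m"
      by (simp add: mult_left_le_one_le)
  qed
  then show ?thesis by (simp add: Cw_def)
qed

lemma Cw_prod: "(real m + 1) * Cw m * Cw (Suc m) = pi / 2"
proof (induction m)
  case 0 then show ?case by (simp add: Cw0 Cw1)
next
  case (Suc m)
  have "(real (Suc m) + 1) * Cw (Suc m) * Cw (Suc (Suc m)) = (real m + 1) * Cw m * Cw (Suc m)"
    by (simp add: Cw_rec field_simps)
  then show ?case using Suc by simp
qed

lemma Cw_lim0: "(\<lambda>m. (real m + 1) * Cw m * Cw (m+2)) \<longlonglongrightarrow> pi / 2"
proof -
  define r where "r m = Cw (m+2) / Cw (m+1)" for m
  have eq: "(real m + 1) * Cw m * Cw (m+2) = pi/2 * r m" for m
  proof -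
    have p: "(real m + 1) * Cw m * Cw (m+1) = pi/2" using Cw_prod[of m] by simp
    have rr: "Cw (m+2) = r m * Cw (m+1)" using Cw_pos[of "m+1"] unfolding r_def by simp
    have "(real m + 1) * Cw m * Cw (m+2) = r m * ((real m + 1) * Cw m * Cw (m+1))"
      unfolding rr by (simp add: algebra_simps)
    also have "\<dots> = r m * (pi/2)" by (simp only: p)
    finally show ?thesis by simp
  qed
  have lo: "(real m + 1) / (real m + 2) \<le> r m" for m
  proof -
    have "Cw (m+1) \<le> Cw m" using Cw_mono[of m] by simp
    also have "Cw m = (real m + 2) / (real m + 1) * Cw (m+2)"
      using Cw_rec[of m] by (simp add: field_simps)
    finally show ?thesis using Cw_pos[of "m+1"] unfolding r_def
      by (simp add: field_simps)
  qed
  have hi: "r m \<le> 1" for m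
    using Cw_mono[of "m+1"] Cw_pos[of "m+1"] unfolding r_def by (simp add: field_simps)
  have l1: "(\<lambda>m. (real m + 1) / (real m + 2)) \<longlonglongrightarrow> 1" by real_asymp
  have "r \<longlonglongrightarrow> 1"
    by (rule real_tendsto_sandwich[OF _ _ l1 tendsto_const]) (auto intro!: always_eventually lo hi)
  then have "(\<lambda>m. pi/2 * r m) \<longlonglongrightarrow> pi/2 * 1" by (intro tendsto_intros)
  then show ?thesis unfolding eq by simp
qed

lemma Cw_lim: "(\<lambda>n. (2 * real n + 3) * Cw (2*n+2) * Cw (2*n+4)) \<longlonglongrightarrow> pi / 2"
proof -
  have sm: "strict_mono (\<lambda>n::nat. 2*n+2)" by (auto simp: strict_mono_def)
  have "((\<lambda>m. (real m + 1) * Cw m * Cw (m+2)) \<circ> (\<lambda>n. 2*n+2)) \<longlonglongrightarrow> pi / 2"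
    by (rule LIMSEQ_subseq_LIMSEQ[OF Cw_lim0 sm])
  moreover have "((\<lambda>m. (real m + 1) * Cw m * Cw (m+2)) \<circ> (\<lambda>n. 2*n+2)) = (\<lambda>n. (2 * real n + 3) * Cw (2*n+2) * Cw (2*n+4))"
    by (rule ext) (simp add: o_def numeral_eq_Suc algebra_simps)
  ultimately show ?thesis by simp
qed


lemma sqrt_diff_bound:
  fixes p q :: real
  assumes p: "0 < p" and pq: "p \<le> q"
  shows "0 \<le> 1 / sqrt p - 1 / sqrt q \<and> 1 / sqrt p - 1 / sqrt q \<le> (q - p) / (p * sqrt p)"
proof -
  define a b where "a = sqrt p" and "b = sqrt q"
  have a: "a > 0" "a * a = p" using p by (auto simp: a_def)
  have b: "b > 0" "b * b = q" using p pq by (auto simp: b_def)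
  have ab: "a \<le> b" unfolding a_def b_def using pq by simp
  have e: "1 / a - 1 / b = (b - a) / (a * b)" using a b by (simp add: field_simps)
  have e2: "b - a = (q - p) / (a + b)" using a b by (simp add: field_simps)
  have "(b - a) / (a * b) \<le> ((q - p) / a) / (a * a)"
  proof (rule frac_le)
    show "0 \<le> (q - p) / a" using a pq by simp
    show "b - a \<le> (q - p) / a" unfolding e2 using a b pq p by (intro divide_left_mono) auto
    show "0 < a * a" using a(1) by simp
    show "a * a \<le> a * b" using a ab by (intro mult_left_mono) auto
  qed
  then have "1 / a - 1 / b \<le> (q - p) / (p * a)" unfolding e using a p by (simp add: field_simps)
  moreover have "0 \<le> 1 / a - 1 / b" unfolding e using a b ab by simp
  ultimately show ?thesis by (simp add: a_def b_def)
qed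


definition xi :: real where "xi = 3 - 2 * sqrt 2"
definition eta :: real where "eta = 3 + 2 * sqrt 2"

lemma xi_eta: "xi * eta = 1" "xi + eta = 6" "0 < xi" "xi < 1" "eta > 0"
proof -
  have s2: "sqrt 2 * sqrt 2 = (2::real)" by simp
  have s2b: "sqrt 2 < (3/2::real)" by (rule real_less_lsqrt) (auto simp: power2_eq_square)
  show "xi * eta = 1" using s2 unfolding xi_def eta_def by (simp add: algebra_simps)
  show "xi + eta = 6" unfolding xi_def eta_def by simp
  show "0 < xi" using s2b unfolding xi_def by simp
  have "sqrt 2 > (1::real)" by (rule real_less_rsqrt) auto
  then show "xi < 1" unfolding xi_def by simp
  show "eta > 0" unfolding eta_def by (simp add: add_pos_nonneg)
qed

definition EE :: "real \<Rightarrow> real" where "EE t = eta - xi * cos t ^ 2"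

lemma EE_ge: "EE t \<ge> eta - xi"
proof -
  have "cos t ^ 2 \<le> 1" using sin_cos_squared_add[of t] zero_le_power2[of "sin t"] by linarith
  then have "xi * cos t ^ 2 \<le> xi" using xi_eta(3) by (simp add: mult_left_le_one_le)
  then show ?thesis unfolding EE_def by simp
qed

lemma e1_pos: "eta - xi > 0" using xi_eta by simp
lemma EE_pos: "EE t > 0" using EE_ge[of t] e1_pos by linarith
lemma EE_nz [simp]: "EE t \<noteq> 0" using EE_pos[of t] by simp
lemma sqrt_EE_nz [simp]: "sqrt (EE t) \<noteq> 0" using EE_pos[of t] by simp
lemma cont_EE [continuous_intros]: "continuous_on S EE"
  unfolding EE_def by (intro continuous_intros)

definition V :: "nat \<Rightarrow> real" where
  "V k = integral {0..pi/2} (\<lambda>t. cos t ^ (2*k) / sqrt (EE t))"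

lemma V_int: "((\<lambda>t. cos t ^ (2*k) / sqrt (EE t)) has_integral V k) {0..pi/2}"
  unfolding V_def
  by (intro integrable_integral integrable_continuous_interval continuous_intros) auto

lemma alg1: fixes c s r x y k p :: real
 assumes "r > 0" "r * r = y - x * (c * c)" "c * c + s * s = 1" "x + y = 6"
 shows "((2 * k+1) * p * (-s) * s + (c * p) * c) * r + (x * c * s / r) * ((c * p) * s) = - (((2 * k+1) * y * p - 12 * (k+1) * (c * c * p) + (2 * k+3) * x * (c * c * c * c * p)) / r)"
proof -
  have r0: "r \<noteq> 0" using assms by simp
  have H: "((2 * k+1) * p * (-s) * s + (c * p) * c) * r * r + (x * c * s) * ((c * p) * s) = - (((2 * k+1) * y * p - 12 * (k+1) * (c * c * p) + (2 * k+3) * x * (c * c * c * c * p)))"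
    using assms(2-4) by algebra
  have e: "((2 * k+1) * p * (-s) * s + (c * p) * c) * r + (x * c * s / r) * ((c * p) * s) = (((2 * k+1) * p * (-s) * s + (c * p) * c) * r * r + (x * c * s) * ((c * p) * s)) / r"
    using r0 by (simp add: field_simps)
  show ?thesis unfolding e H by (simp add: minus_divide_left algebra_simps)
qed

lemma V_deriv:
  "((\<lambda>t. cos t ^ (2 * n+1) * sin t * sqrt (EE t)) has_real_derivative
     - (((2 * real n+1) * eta * cos x ^ (2 * n) - 12 * (real n + 1) * cos x ^ (2 * n+2)
         + (2 * real n+3) * xi * cos x ^ (2 * n+4)) / sqrt (EE x))) (at x)"
proof -
  define c s r p where "c = cos x" and "s = sin x" and "r = sqrt (EE x)" and "p = cos x ^ (2 * n)"
  have d1: "((\<lambda>t. cos t ^ (2 * n+1) * sin t) has_real_derivative ((2 * real n+1) * p * (-s) * s + (c * p) * c)) (at x)"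
    apply (rule derivative_eq_intros refl)+
    apply (simp add: c_def s_def p_def algebra_simps)
    done
  have dE: "(EE has_real_derivative (2 * xi * c * s)) (at x)"
    unfolding EE_def
    apply (rule derivative_eq_intros refl)+
    apply (simp add: c_def s_def algebra_simps)
    done
  have d2: "((\<lambda>t. sqrt (EE t)) has_real_derivative (xi * c * s/r)) (at x)"
    apply (rule DERIV_cong[OF DERIV_chain2[OF DERIV_real_sqrt[OF EE_pos] dE]])
    apply (simp add: r_def field_simps)
    done
  have d3: "((\<lambda>t. (cos t ^ (2 * n+1) * sin t) * sqrt (EE t)) has_real_derivative
       (((2 * real n+1) * p * (-s) * s + (c * p) * c) * sqrt (EE x) + (xi * c * s/r) * (cos x ^ (2 * n+1) * sin x))) (at x)"
    by (rule DERIV_mult[OF d1 d2])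
  have r0: "r > 0" unfolding r_def using EE_pos by simp
  have rr: "r * r = eta - xi * (c * c)" unfolding r_def c_def using EE_pos[of x]
    by (simp add: EE_def power2_eq_square)
  have cs: "c * c + s * s = 1" unfolding c_def s_def by (rule sin_cos_squared_add3)
  have pw: "cos x ^ (2 * n+1) = c * p" "cos x ^ (2 * n+2) = c * c * p" "cos x ^ (2 * n+4) = c * c * c * c * p"
    by (simp_all add: c_def p_def power_add eval_nat_numeral)
  show ?thesis
    apply (rule DERIV_cong[OF d3])
    unfolding pw r_def[symmetric] s_def[symmetric] p_def[symmetric]
    apply (rule alg1[OF r0 rr cs xi_eta(2)])
    done
qed

lemma V_rec: "(2 * real n+1) * eta * V n - 12 * (real n + 1) * V (n+1) + (2 * real n+3) * xi * V (n+2) = 0"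
proof -
  have h0: "((\<lambda>x. - (((2 * real n+1) * eta * cos x ^ (2 * n) - 12 * (real n + 1) * cos x ^ (2 * n+2)
         + (2 * real n+3) * xi * cos x ^ (2 * n+4)) / sqrt (EE x))) has_integral 0) {0..pi/2}"
    by (rule ftc_zero[OF _ V_deriv]) auto
  have h1: "((\<lambda>x. - ((2 * real n+1) * eta * (cos x ^ (2 * n) / sqrt (EE x)) - 12 * (real n + 1) * (cos x ^ (2 * n + 2) / sqrt (EE x))
         + (2 * real n+3) * xi * (cos x ^ (2 * n + 4) / sqrt (EE x)))) has_integral
         - ((2 * real n+1) * eta * V n - 12 * (real n + 1) * V (n+1) + (2 * real n+3) * xi * V (n+2))) {0..pi/2}"
  proof -
    have a: "2 * (n+1) = 2 * n + 2" "2 * (n+2) = 2 * n + 4" by simp_all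
    show ?thesis unfolding a
      apply (intro has_integral_neg has_integral_add has_integral_diff has_integral_mult_right)
      using V_int[of n] V_int[of "n+1"] V_int[of "n+2"] unfolding a by auto
  qed
  have eq: "(\<lambda>x. - ((2 * real n+1) * eta * (cos x ^ (2 * n) / sqrt (EE x)) - 12 * (real n + 1) * (cos x ^ (2 * n + 2) / sqrt (EE x))
         + (2 * real n+3) * xi * (cos x ^ (2 * n + 4) / sqrt (EE x)))) =
       (\<lambda>x. - (((2 * real n+1) * eta * cos x ^ (2 * n) - 12 * (real n + 1) * cos x ^ (2 * n+2)
         + (2 * real n+3) * xi * cos x ^ (2 * n+4)) / sqrt (EE x)))"
    by (rule ext) (simp add: add_divide_distrib diff_divide_distrib algebra_simps)
  from has_integral_unique[OF h0 h1[unfolded eq]] show ?thesis by simp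
qed


definition e1 :: real where "e1 = eta - xi"
definition h1 :: real where "h1 = 1 / sqrt e1"
definition MM :: real where "MM = xi / (e1 * sqrt e1)"

lemma e1pos: "e1 > 0" unfolding e1_def using e1_pos .
lemma h1pos: "h1 > 0" unfolding h1_def using e1pos by simp

lemma diff_bound: "0 \<le> h1 - 1 / sqrt (EE t) \<and> h1 - 1 / sqrt (EE t) \<le> MM * (1 - cos t ^ 2)"
proof -
  have eq: "EE t - e1 = xi * (1 - cos t ^ 2)" unfolding EE_def e1_def by (simp add: algebra_simps)
  have ge: "e1 \<le> EE t" using EE_ge[of t] unfolding e1_def .
  have eq2: "xi * (1 - cos t ^ 2) / (e1 * sqrt e1) = xi / (e1 * sqrt e1) * (1 - cos t ^ 2)" by simp
  show ?thesis using sqrt_diff_bound[OF e1pos ge]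
    unfolding h1_def MM_def eq eq2 by simp
qed

lemma Cw_diff: "Cw (2*k) - Cw (2*k+2) = Cw (2*k) / (2 * real k + 2)"
proof -
  have "Cw (2*k+2) = (2*real k + 1) / (2*real k + 2) * Cw (2*k)"
    using Cw_rec[of "2*k"] by (simp add: eval_nat_numeral)
  then show ?thesis by (simp add: field_simps)
qed

lemma V_bounds: "0 \<le> h1 * Cw (2*k) - V k \<and> h1 * Cw (2*k) - V k \<le> MM * (Cw (2*k) - Cw (2*k+2))"
proof -
  have g: "((\<lambda>t. h1 * cos t ^ (2*k) - cos t ^ (2*k) / sqrt (EE t)) has_integral (h1 * Cw (2*k) - V k)) {0..pi/2}"
    by (intro has_integral_diff has_integral_mult_right Cw_int V_int)
  have u: "((\<lambda>t. MM * (cos t ^ (2*k) - cos t ^ (2*k+2))) has_integral (MM * (Cw (2*k) - Cw (2*k+2)))) {0..pi/2}"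
    by (intro has_integral_diff has_integral_mult_right Cw_int)
  have pw: "cos t ^ (2*k) \<ge> 0" for t :: real by simp
  have lo: "0 \<le> h1 * cos t ^ (2*k) - cos t ^ (2*k) / sqrt (EE t)" for t
  proof -
    have "h1 * cos t ^ (2*k) - cos t ^ (2*k) / sqrt (EE t) = cos t ^ (2*k) * (h1 - 1 / sqrt (EE t))"
      by (simp add: algebra_simps)
    then show ?thesis using diff_bound[of t] pw[of t] by simp
  qed
  have hi: "h1 * cos t ^ (2*k) - cos t ^ (2*k) / sqrt (EE t) \<le> MM * (cos t ^ (2*k) - cos t ^ (2*k+2))" for t
  proof -
    have "h1 * cos t ^ (2*k) - cos t ^ (2*k) / sqrt (EE t) = cos t ^ (2*k) * (h1 - 1 / sqrt (EE t))"
      by (simp add: algebra_simps)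
    also have "\<dots> \<le> cos t ^ (2*k) * (MM * (1 - cos t ^ 2))"
      using diff_bound[of t] pw[of t] by (intro mult_left_mono) auto
    also have "\<dots> = MM * (cos t ^ (2*k) - cos t ^ (2*k+2))" by (simp add: power_add power2_eq_square algebra_simps)
    finally show ?thesis .
  qed
  have "0 \<le> h1 * Cw (2*k) - V k"
    by (rule has_integral_le[OF has_integral_0 g]) (use lo in auto)
  moreover have "h1 * Cw (2*k) - V k \<le> MM * (Cw (2*k) - Cw (2*k+2))"
    by (rule has_integral_le[OF g u]) (use hi in auto)
  ultimately show ?thesis by simp
qed

lemma MM_pos: "MM > 0" unfolding MM_def using e1pos xi_eta by simp

lemma V_ratio: "(\<lambda>k. V k / (h1 * Cw (2*k))) \<longlonglongrightarrow> 1"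
proof (rule real_tendsto_sandwich[OF _ _ _ tendsto_const])
  have hc: "h1 * Cw (2*k) > 0" for k using h1pos Cw_pos by simp
  show "\<forall>\<^sub>F k in sequentially. 1 - MM / h1 / (2 * real k + 2) \<le> V k / (h1 * Cw (2*k))"
  proof (intro always_eventually allI)
    fix k
    have A: "h1 * Cw (2*k) - V k \<le> MM * (Cw (2*k) / (2 * real k + 2))"
      using V_bounds[of k] Cw_diff[of k] by simp
    have "1 - V k / (h1 * Cw (2*k)) = (h1 * Cw (2*k) - V k) / (h1 * Cw (2*k))"
      using h1pos Cw_pos[of "2*k"] by (simp add: diff_divide_distrib)
    also have "\<dots> \<le> (MM * (Cw (2*k) / (2 * real k + 2))) / (h1 * Cw (2*k))"
      using A hc[of k] by (intro divide_right_mono) auto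
    also have "\<dots> = MM / h1 / (2 * real k + 2)"
    proof -
      have "h1 \<noteq> 0" "Cw (2*k) \<noteq> 0" "2 * real k + 2 \<noteq> 0" using h1pos Cw_pos[of "2*k"] by auto
      moreover have "\<And>C h d M::real. C \<noteq> 0 \<Longrightarrow> h \<noteq> 0 \<Longrightarrow> d \<noteq> 0 \<Longrightarrow> M * (C / d) / (h * C) = M / h / d"
        by (simp add: field_simps)
      ultimately show ?thesis by blast
    qed
    finally show "1 - MM / h1 / (2 * real k + 2) \<le> V k / (h1 * Cw (2*k))" by linarith
  qed
  show "\<forall>\<^sub>F k in sequentially. V k / (h1 * Cw (2*k)) \<le> 1"
    using V_bounds hc by (intro always_eventually allI) (simp add: field_simps)
  show "(\<lambda>k. 1 - MM / h1 / (2 * real k + 2)) \<longlonglongrightarrow> 1" by real_asymp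
qed

lemma V_pos: "V k > 0"
proof -
  have "((\<lambda>t. cos t ^ (2*k) / sqrt eta) has_integral (Cw (2*k) / sqrt eta)) {0..pi/2}"
    using Cw_int[of "2*k"] by (rule has_integral_divide)
  then have "Cw (2*k) / sqrt eta \<le> V k"
  proof (rule has_integral_le[OF _ V_int])
    fix t
    have "EE t \<le> eta" unfolding EE_def using xi_eta by simp
    then have "1 / sqrt eta \<le> 1 / sqrt (EE t)" using EE_pos[of t] by (intro divide_left_mono) auto
    then show "cos t ^ (2*k) / sqrt eta \<le> cos t ^ (2*k) / sqrt (EE t)"
      using zero_le_even_power[of "2*k" "cos t"] by (simp add: divide_left_mono mult_left_mono
         divide_inverse)
  qed
  moreover have "Cw (2*k) / sqrt eta > 0" using Cw_pos xi_eta by simp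
  ultimately show ?thesis by simp
qed

lemma V_prod: "(\<lambda>n. (2 * real n + 3) * V (n+1) * V (n+2)) \<longlonglongrightarrow> h1^2 * (pi / 2)"
proof -
  have r1: "(\<lambda>n. V (n+1) / (h1 * Cw (2*(n+1)))) \<longlonglongrightarrow> 1"
    using LIMSEQ_ignore_initial_segment[OF V_ratio, of 1] by simp
  have r2: "(\<lambda>n. V (n+2) / (h1 * Cw (2*(n+2)))) \<longlonglongrightarrow> 1"
    using LIMSEQ_ignore_initial_segment[OF V_ratio, of 2] by simp
  have "(\<lambda>n. (V (n+1) / (h1 * Cw (2*(n+1)))) * (V (n+2) / (h1 * Cw (2*(n+2)))) * h1^2 *
            ((2 * real n + 3) * Cw (2*n+2) * Cw (2*n+4))) \<longlonglongrightarrow> 1 * 1 * h1^2 * (pi/2)"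
    by (intro tendsto_mult r1 r2 tendsto_const Cw_lim)
  moreover have "(V (n+1) / (h1 * Cw (2*(n+1)))) * (V (n+2) / (h1 * Cw (2*(n+2)))) * h1^2 *
            ((2 * real n + 3) * Cw (2*n+2) * Cw (2*n+4)) = (2 * real n + 3) * V (n+1) * V (n+2)" for n
  proof -
    have a: "2*(n+1) = 2*n+2" "2*(n+2) = 2*n+4" by simp_all
    show ?thesis unfolding a using Cw_pos[of "2*n+2"] Cw_pos[of "2*n+4"] h1pos
      by (simp add: field_simps power2_eq_square)
  qed
  ultimately show ?thesis by simp
qed


definition DD :: "real \<Rightarrow> real" where "DD t = 1 + xi * cos t ^ 2"
definition psi :: "real \<Rightarrow> real" where "psi t = xi * sin t ^ 2 * EE t / DD t ^ 2"
definition gg :: "real \<Rightarrow> real" where "gg t = psi t ^ 2"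
definition gg' :: "real \<Rightarrow> real" where
  "gg' t = 32 * xi * psi t * cos t * sin t * (1 - xi * cos t ^ 2) / DD t ^ 3"

lemma DD_pos: "DD t > 0" unfolding DD_def using xi_eta(3) by (simp add: add_pos_nonneg)
lemma DD_nz [simp]: "DD t \<noteq> 0" using DD_pos[of t] by simp

lemma cont_DD [continuous_intros]: "continuous_on S DD"
  unfolding DD_def by (intro continuous_intros)

lemma alg_psi:
  fixes c s x y E D :: real
  assumes h: "c * c + s * s = 1" "x * y = 1" "x + y = 6" "E = y - x * (c * c)" "D = 1 + x * (c * c)" and D0: "D \<noteq> 0"
  shows "((x * (2 * s * c) * E + x * (s * s) * (2 * x * c * s)) * (D * D) - x * (s * s) * E * (2 * D * (- 2 * x * c * s))) / ((D * D) * (D * D))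
         = 16 * x * c * s * (1 - x * (c * c)) / (D * D * D)"
proof -
  have H: "(x * (2 * s * c) * E + x * (s * s) * (2 * x * c * s)) * D - x * (s * s) * E * (2 * (- 2 * x * c * s))
     = 16 * x * c * s * (1 - x * (c * c))"
    using h by algebra
  have "((x * (2 * s * c) * E + x * (s * s) * (2 * x * c * s)) * (D * D) - x * (s * s) * E * (2 * D * (- 2 * x * c * s))) / ((D * D) * (D * D))
      = ((x * (2 * s * c) * E + x * (s * s) * (2 * x * c * s)) * D - x * (s * s) * E * (2 * (- 2 * x * c * s))) / (D * D * D)"
    using D0 by (simp add: field_simps)
  then show ?thesis unfolding H .
qed

lemma alg_1g:
  fixes c s x y E D :: real
  assumes h: "c * c + s * s = 1" "x * y = 1" "x + y = 6" "E = y - x * (c * c)" "D = 1 + x * (c * c)"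
  shows "(D * D) * (D * D) - (x * (s * s) * E) * (x * (s * s) * E) = 16 * x * (c * c) * ((1 - x * (c * c)) * (1 - x * (c * c)))"
  using h by algebra

lemma alg_F:
  fixes c s x y E D r :: real
  assumes h: "c * c + s * s = 1" "x * y = 1" "x + y = 6" "r * r = y - x * (c * c)" "D = 1 + x * (c * c)" and D0: "D \<noteq> 0" and r0: "r \<noteq> 0"
  shows "4 * x * ((c * c - s * s) * r / D + c * s * (x * c * s / r) / D + c * s * r * (2 * x * c * s) / (D * D))
     = 4 / r - 8 * x * (s * s) * r / (D * D) - 4 * x * (c * c) / r"
proof -
  have H: "4 * x * ((c * c - s * s) * (r * r) * D + c * s * (x * c * s) * D + c * s * (r * r) * (2 * x * c * s))
     = 4 * (D * D) - 8 * x * (s * s) * (r * r) - 4 * x * (c * c) * (D * D)"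
    using h by algebra
  have e1: "4 * x * ((c * c - s * s) * r / D + c * s * (x * c * s / r) / D + c * s * r * (2 * x * c * s) / (D * D))
     = (4 * x * ((c * c - s * s) * (r * r) * D + c * s * (x * c * s) * D + c * s * (r * r) * (2 * x * c * s))) / (r * (D * D))"
    using D0 r0 by (simp add: field_simps)
  have e2: "4 / r - 8 * x * (s * s) * r / (D * D) - 4 * x * (c * c) / r
     = (4 * (D * D) - 8 * x * (s * s) * (r * r) - 4 * x * (c * c) * (D * D)) / (r * (D * D))"
    using D0 r0 by (simp add: field_simps)
  show ?thesis unfolding e1 e2 H ..
qed

lemma psi_deriv: "(psi has_real_derivative (16 * xi * cos x * sin x * (1 - xi * cos x ^ 2) / DD x ^ 3)) (at x)"
proof -
  have dE: "(EE has_real_derivative (2 * xi * cos x * sin x)) (at x)"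
    unfolding EE_def
    apply (rule derivative_eq_intros refl)+
    apply (simp add: algebra_simps)
    done
  have dD: "(DD has_real_derivative (- 2 * xi * cos x * sin x)) (at x)"
    unfolding DD_def
    apply (rule derivative_eq_intros refl)+
    apply (simp add: algebra_simps)
    done
  have dnum: "((\<lambda>t. xi * sin t ^ 2 * EE t) has_real_derivative
      (xi * (2 * sin x * cos x) * EE x + xi * (sin x * sin x) * (2 * xi * cos x * sin x))) (at x)"
    apply (rule derivative_eq_intros refl dE)+
    apply (simp add: power2_eq_square algebra_simps)
    done
  have dden: "((\<lambda>t. DD t ^ 2) has_real_derivative (2 * DD x * (- 2 * xi * cos x * sin x))) (at x)"
    apply (rule derivative_eq_intros refl dD)+
    apply (simp add: power2_eq_square algebra_simps)
    done
  have "(psi has_real_derivative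
     ((xi * (2 * sin x * cos x) * EE x + xi * (sin x * sin x) * (2 * xi * cos x * sin x)) * (DD x ^ 2)
       - (xi * sin x ^ 2 * EE x) * (2 * DD x * (- 2 * xi * cos x * sin x))) / (DD x ^ 2 * DD x ^ 2)) (at x)"
    unfolding psi_def[abs_def] by (rule DERIV_divide[OF dnum dden]) simp
  moreover have "((xi * (2 * sin x * cos x) * EE x + xi * (sin x * sin x) * (2 * xi * cos x * sin x)) * (DD x ^ 2)
       - (xi * sin x ^ 2 * EE x) * (2 * DD x * (- 2 * xi * cos x * sin x))) / (DD x ^ 2 * DD x ^ 2)
     = 16 * xi * cos x * sin x * (1 - xi * cos x ^ 2) / DD x ^ 3"
  proof -
    have EEx: "EE x = eta - xi * (cos x * cos x)" by (simp add: EE_def power2_eq_square)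
    have DDx: "DD x = 1 + xi * (cos x * cos x)" by (simp add: DD_def power2_eq_square)
    show ?thesis
      apply (simp only: power2_eq_square power3_eq_cube)
      apply (rule alg_psi[OF sin_cos_squared_add3[of x] xi_eta(1,2) EEx DDx DD_nz])
      done
  qed
  ultimately show ?thesis by simp
qed


lemma gg_deriv: "(gg has_real_derivative gg' x) (at x)"
proof -
  have "(gg has_real_derivative (2 * psi x * (16 * xi * cos x * sin x * (1 - xi * cos x ^ 2) / DD x ^ 3))) (at x)"
    unfolding gg_def[abs_def]
    apply (rule derivative_eq_intros refl psi_deriv)+
    apply simp
    done
  moreover have "2 * psi x * (16 * xi * cos x * sin x * (1 - xi * cos x ^ 2) / DD x ^ 3) = gg' x"
    unfolding gg'_def by simp
  ultimately show ?thesis by simp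
qed

lemma cont_psi [continuous_intros]: "continuous_on S psi"
  unfolding psi_def by (intro continuous_intros) auto

lemma cont_gg': "continuous_on S gg'"
  unfolding gg'_def by (intro continuous_intros) auto

lemma psi_nonneg: "psi t \<ge> 0"
  unfolding psi_def using EE_pos[of t] DD_pos[of t] xi_eta(3) by simp

lemma one_minus_xc: "1 - xi * cos t ^ 2 > 0"
proof -
  have "cos t ^ 2 \<le> 1" using sin_cos_squared_add[of t] zero_le_power2[of "sin t"] by linarith
  then have "xi * cos t ^ 2 \<le> xi" using xi_eta(3) by (simp add: mult_left_le_one_le)
  then show ?thesis using xi_eta(4) by simp
qed

lemma gg'_nonneg: "t \<in> {0..pi/2} \<Longrightarrow> gg' t \<ge> 0"
proof -
  assume t: "t \<in> {0..pi/2}"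
  then have "cos t \<ge> 0" by (auto intro: cos_ge_zero)
  moreover have "sin t \<ge> 0" using t by (auto intro: sin_ge_zero)
  ultimately show ?thesis unfolding gg'_def using psi_nonneg[of t] one_minus_xc[of t] DD_pos[of t] xi_eta(3)
    by simp
qed

lemma gg0: "gg 0 = 0" unfolding gg_def psi_def by simp
lemma gg1: "gg (pi/2) = 1" unfolding gg_def psi_def EE_def DD_def using xi_eta(1) by simp

lemma lbint_set: "(LBINT x. f x * indicator S x) = (LINT x:S|lborel. (f x :: real))"
  by (simp add: set_lebesgue_integral_def mult.commute)

lemma subst_beta:
  assumes a: "a > 0"
  shows "((\<lambda>t. (gg t) powr (a - 1) * (1 - gg t) powr (1/2 - 1) * gg' t) has_integral Beta a (1/2)) {0..pi/2}"
proof -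
  let ?f = "\<lambda>t::real. t powr (a - 1) * (1 - t) powr (1/2 - 1)"
  have int: "set_integrable lborel {gg 0..gg (pi/2)} ?f"
    unfolding gg0 gg1 using integrable_Beta[OF a, of "1/2"] by simp
  have d: "\<And>x. x \<in> {0..pi/2} \<Longrightarrow> (gg has_real_derivative gg' x) (at x)" using gg_deriv by blast
  have pi0: "0 \<le> pi/2" by simp
  note sub = integral_substitution[where g=gg and a=0 and b="pi/2" and g'=gg' and f="?f", OF int d cont_gg' gg'_nonneg pi0]
  have si: "set_integrable lborel {0..pi/2} (\<lambda>x. ?f (gg x) * gg' x)"
    using sub(1) by simp
  have eq: "(LBINT x. ?f x * indicator {gg 0..gg (pi/2)} x) = (LBINT x. ?f (gg x) * gg' x * indicator {0..pi/2} x)"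
    using sub(2) by simp
  have "integral {0..1} ?f = Beta a (1/2)"
    using has_integral_Beta_real[OF a, of "1/2"] by (simp add: has_integral_iff)
  moreover have "(LINT x:{0..1}|lborel. ?f x) = integral {0..1} ?f"
    using set_borel_integral_eq_integral(2)[OF integrable_Beta[OF a, of "1/2"]] by simp
  moreover have "(LINT x:{0..pi/2}|lborel. ?f (gg x) * gg' x) = integral {0..pi/2} (\<lambda>x. ?f (gg x) * gg' x)"
    using set_borel_integral_eq_integral(2)[OF si] by simp
  moreover have "(\<lambda>x. ?f (gg x) * gg' x) integrable_on {0..pi/2}"
    using set_borel_integral_eq_integral(1)[OF si] by simp
  ultimately show ?thesis using eq unfolding gg0 gg1 lbint_set
    by (simp add: has_integral_iff)
qed


lemma pw_gen:
  assumes t: "0 < t" "t < pi/2"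
  shows "(gg t) powr (a - 1) * (1 - gg t) powr (1/2 - 1) * gg' t = 8 * sqrt xi * sin t / DD t * psi t powr (2*a - 1)"
proof -
  define c s D E where "c = cos t" and "s = sin t" and "D = DD t" and "E = EE t"
  have c: "c > 0" unfolding c_def using t by (intro cos_gt_zero) auto
  have s: "s > 0" unfolding s_def using t by (intro sin_gt_zero) auto
  have D: "D > 0" unfolding D_def by (rule DD_pos)
  have E: "E > 0" unfolding E_def by (rule EE_pos)
  have ps: "psi t = xi * (s * s) * E / (D * D)" unfolding psi_def s_def E_def D_def by (simp add: power2_eq_square)
  have pspos: "psi t > 0" unfolding ps using s E D xi_eta(3) by simp
  have om: "1 - xi * (c * c) > 0" using one_minus_xc[of t] unfolding c_def by (simp add: power2_eq_square)
  define w where "w = sqrt xi * (4 * c * (1 - xi * (c * c)) / (D * D))"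
  have w: "w > 0" unfolding w_def using c om D xi_eta(3) by simp
  have EEt: "E = eta - xi * (c * c)" unfolding E_def c_def EE_def by (simp add: power2_eq_square)
  have DDt: "D = 1 + xi * (c * c)" unfolding D_def c_def DD_def by (simp add: power2_eq_square)
  have cs: "c * c + s * s = 1" unfolding c_def s_def by (rule sin_cos_squared_add3)
  note A = alg_1g[OF cs xi_eta(1,2) EEt DDt]
  have sx: "sqrt xi * sqrt xi = xi" using xi_eta(3) by simp
  have omg: "1 - gg t = w ^ 2"
  proof -
    have "1 - gg t = ((D * D) * (D * D) - (xi * (s * s) * E) * (xi * (s * s) * E)) / ((D * D) * (D * D))"
      unfolding gg_def ps using D by (simp add: field_simps power2_eq_square)
    also have "\<dots> = 16 * xi * (c * c) * ((1 - xi * (c * c)) * (1 - xi * (c * c))) / ((D * D) * (D * D))"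
      unfolding A ..
    also have "\<dots> = xi * (4 * c * (1 - xi * (c * c)) / (D * D)) ^ 2"
      using D by (simp add: field_simps power2_eq_square)
    also have "\<dots> = w ^ 2" unfolding w_def power_mult_distrib using xi_eta(3) by simp
    finally show ?thesis .
  qed
  have p1: "(gg t) powr (a - 1) = psi t powr (2 * a - 2)"
  proof -
    have "gg t = psi t powr 2" unfolding gg_def using pspos by simp
    then show ?thesis by (simp add: powr_powr algebra_simps)
  qed
  have p2: "(1 - gg t) powr (1/2 - 1) = 1 / w"
  proof -
    have "(1 - gg t) powr (1/2 - 1) = (w powr 2) powr (- 1/2)" unfolding omg using w by simp
    also have "\<dots> = w powr (- 1)" by (simp add: powr_powr)
    also have "\<dots> = 1 / w" using w by (simp add: powr_minus_divide)
    finally show ?thesis .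
  qed
  have p3: "psi t powr (2 * a - 2) * psi t = psi t powr (2 * a - 1)"
  proof -
    have "psi t powr (2 * a - 1) = psi t powr ((2 * a - 2) + 1)" by simp
    also have "\<dots> = psi t powr (2 * a - 2) * psi t" unfolding powr_add using pspos by simp
    finally show ?thesis ..
  qed
  have g': "gg' t = 32 * xi * psi t * c * s * (1 - xi * (c * c)) / (D * D * D)"
    unfolding gg'_def c_def s_def D_def by (simp add: power2_eq_square power3_eq_cube)
  have "(gg t) powr (a - 1) * (1 - gg t) powr (1/2 - 1) * gg' t
      = (psi t powr (2 * a - 2) * psi t) * (32 * xi * c * s * (1 - xi * (c * c)) / (w * (D * D * D)))"
    unfolding p1 p2 g' by (simp add: field_simps)
  also have "32 * xi * c * s * (1 - xi * (c * c)) / (w * (D * D * D)) = 8 * sqrt xi * s / D"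
  proof -
    define q where "q = sqrt xi"
    have q: "q > 0" "xi = q * q" unfolding q_def using xi_eta(3) by auto
    have om': "1 - q * q * (c * c) > 0" using om unfolding q(2) .
    show ?thesis unfolding w_def q_def[symmetric] unfolding q(2) using c om' D q(1)
      by (simp add: field_simps)
  qed
  finally show ?thesis unfolding p3 s_def D_def by simp
qed

lemma sqrt_psi: "sin t \<ge> 0 \<Longrightarrow> sqrt (psi t) = sqrt xi * sin t * sqrt (EE t) / DD t"
  unfolding psi_def using DD_pos[of t]
  by (simp add: real_sqrt_mult real_sqrt_divide)

lemma beta14: "((\<lambda>t. 8 / sqrt (EE t)) has_integral Beta (1/4) (1/2)) {0..pi/2}"
proof (rule has_integral_spike_finite[OF _ _ subst_beta])
  show "finite {0, pi/2}" by simp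
  fix t assume "t \<in> {0..pi/2} - {0, pi/2}"
  then have t: "0 < t" "t < pi/2" by auto
  have s: "sin t > 0" using t by (intro sin_gt_zero) auto
  have ps: "psi t > 0" unfolding psi_def using s EE_pos[of t] DD_pos[of t] xi_eta(3) by simp
  have "psi t powr (2 * (1/4) - 1) = 1 / sqrt (psi t)"
    using ps by (simp add: powr_minus_divide powr_half_sqrt[symmetric])
  then show "8 / sqrt (EE t) = (gg t) powr (1/4 - 1) * (1 - gg t) powr (1/2 - 1) * gg' t"
    unfolding pw_gen[OF t] sqrt_psi[OF less_imp_le[OF s]]
    using s DD_pos[of t] EE_pos[of t] xi_eta(3) by (simp add: field_simps)
qed simp

lemma beta34: "((\<lambda>t. 8 * xi * sin t ^ 2 * sqrt (EE t) / DD t ^ 2) has_integral Beta (3/4) (1/2)) {0..pi/2}"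
proof (rule has_integral_spike_finite[OF _ _ subst_beta])
  show "finite {0, pi/2}" by simp
  fix t assume "t \<in> {0..pi/2} - {0, pi/2}"
  then have t: "0 < t" "t < pi/2" by auto
  have s: "sin t > 0" using t by (intro sin_gt_zero) auto
  have ps: "psi t > 0" unfolding psi_def using s EE_pos[of t] DD_pos[of t] xi_eta(3) by simp
  have pp: "psi t powr (2 * (3/4) - 1) = sqrt xi * sin t * sqrt (EE t) / DD t"
    using ps sqrt_psi[OF less_imp_le[OF s]] by (simp add: powr_half_sqrt)
  show "8 * xi * sin t ^ 2 * sqrt (EE t) / DD t ^ 2 = (gg t) powr (3/4 - 1) * (1 - gg t) powr (1/2 - 1) * gg' t"
    unfolding pw_gen[OF t] pp
    using s DD_pos[of t] EE_pos[of t] xi_eta(3) by (simp add: field_simps power2_eq_square)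
qed simp


lemma alg_F2:
  fixes c s x y D r :: real
  assumes h: "c * c + s * s = 1" "x * y = 1" "x + y = 6" "r * r = y - x * (c * c)" "D = 1 + x * (c * c)" and D0: "D \<noteq> 0" and r0: "r \<noteq> 0"
  shows "((4 * x * ((c * c - s * s) * r + (c * s) * (x * c * s / r))) * D - (4 * x * (c * s) * r) * (- 2 * x * c * s)) / (D * D)
     = 4 / r - 8 * x * (s * s) * r / (D * D) - 4 * x * (c * c) / r"
proof -
  have "((4 * x * ((c * c - s * s) * r + (c * s) * (x * c * s / r))) * D - (4 * x * (c * s) * r) * (- 2 * x * c * s)) / (D * D)
     = 4 * x * ((c * c - s * s) * r / D + c * s * (x * c * s / r) / D + c * s * r * (2 * x * c * s) / (D * D))"
    using D0 r0 by (simp add: field_simps)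
  also have "\<dots> = 4 / r - 8 * x * (s * s) * r / (D * D) - 4 * x * (c * c) / r"
    by (rule alg_F[OF h D0 r0])
  finally show ?thesis .
qed

lemma F_deriv: "((\<lambda>t. 4 * xi * (cos t * sin t) * sqrt (EE t) / DD t) has_real_derivative
    (4 / sqrt (EE x) - 8 * xi * sin x ^ 2 * sqrt (EE x) / DD x ^ 2 - 4 * xi * (cos x ^ 2 / sqrt (EE x)))) (at x)"
proof -
  define c s r where "c = cos x" and "s = sin x" and "r = sqrt (EE x)"
  have dE: "(EE has_real_derivative (2 * xi * c * s)) (at x)"
    unfolding EE_def
    apply (rule derivative_eq_intros refl)+
    apply (simp add: c_def s_def algebra_simps)
    done
  have dD: "(DD has_real_derivative (- 2 * xi * c * s)) (at x)"
    unfolding DD_def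
    apply (rule derivative_eq_intros refl)+
    apply (simp add: c_def s_def algebra_simps)
    done
  have dS: "((\<lambda>t. sqrt (EE t)) has_real_derivative (xi * c * s / r)) (at x)"
    apply (rule DERIV_cong[OF DERIV_chain2[OF DERIV_real_sqrt[OF EE_pos] dE]])
    apply (simp add: r_def field_simps)
    done
  have dcs: "((\<lambda>t. cos t * sin t) has_real_derivative (c * c - s * s)) (at x)"
    apply (rule derivative_eq_intros refl)+
    apply (simp add: c_def s_def algebra_simps)
    done
  have dN: "((\<lambda>t. 4 * xi * (cos t * sin t) * sqrt (EE t)) has_real_derivative
      (4 * xi * ((c * c - s * s) * r + (c * s) * (xi * c * s / r)))) (at x)"
  proof -
    have "((\<lambda>t. (4 * xi) * ((cos t * sin t) * sqrt (EE t))) has_real_derivative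
        (4 * xi) * ((c * c - s * s) * sqrt (EE x) + (xi * c * s / r) * (cos x * sin x))) (at x)"
      by (intro DERIV_cmult DERIV_mult dcs dS)
    then show ?thesis by (simp add: r_def c_def s_def algebra_simps)
  qed
  have dF: "((\<lambda>t. 4 * xi * (cos t * sin t) * sqrt (EE t) / DD t) has_real_derivative
     ((4 * xi * ((c * c - s * s) * r + (c * s) * (xi * c * s / r))) * DD x - (4 * xi * (c * s) * r) * (- 2 * xi * c * s)) / (DD x * DD x)) (at x)"
    using DERIV_divide[OF dN dD DD_nz[of x]] by (simp add: c_def s_def r_def)
  have r0: "r > 0" unfolding r_def using EE_pos by simp
  have rr: "r * r = eta - xi * (c * c)" unfolding r_def c_def using EE_pos[of x]
    by (simp add: EE_def power2_eq_square)
  have DDx: "DD x = 1 + xi * (c * c)" by (simp add: DD_def c_def power2_eq_square)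
  have cs: "c * c + s * s = 1" unfolding c_def s_def by (rule sin_cos_squared_add3)
  note A = alg_F2[OF cs xi_eta(1,2) rr DDx DD_nz less_imp_neq[OF r0, symmetric]]
  show ?thesis using dF unfolding A by (simp add: c_def s_def r_def power2_eq_square)
qed

lemma cert_int: "4 * V 0 - Beta (3/4) (1/2) - 4 * xi * V 1 = 0"
proof -
  have h0: "((\<lambda>x. 4 / sqrt (EE x) - 8 * xi * sin x ^ 2 * sqrt (EE x) / DD x ^ 2 - 4 * xi * (cos x ^ 2 / sqrt (EE x))) has_integral 0) {0..pi/2}"
    by (rule ftc_zero[OF _ F_deriv]) auto
  have v0: "((\<lambda>x. 4 / sqrt (EE x)) has_integral 4 * V 0) {0..pi/2}"
    using has_integral_mult_right[OF V_int[of 0], of 4] by simp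
  have v1: "((\<lambda>x. 4 * xi * (cos x ^ 2 / sqrt (EE x))) has_integral 4 * xi * V 1) {0..pi/2}"
    using has_integral_mult_right[OF V_int[of 1], of "4 * xi"] by simp
  have "((\<lambda>x. 4 / sqrt (EE x) - 8 * xi * sin x ^ 2 * sqrt (EE x) / DD x ^ 2 - 4 * xi * (cos x ^ 2 / sqrt (EE x))) has_integral
     (4 * V 0 - Beta (3/4) (1/2) - 4 * xi * V 1)) {0..pi/2}"
    by (intro has_integral_diff v0 v1 beta34)
  from has_integral_unique[OF h0 this] show ?thesis by simp
qed

lemma V0_beta: "8 * V 0 = Beta (1/4) (1/2)"
proof -
  have "((\<lambda>x. 8 / sqrt (EE x)) has_integral 8 * V 0) {0..pi/2}"
    using has_integral_mult_right[OF V_int[of 0], of 8] by simp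
  from has_integral_unique[OF this beta14] show ?thesis .
qed


definition LL :: real where "LL = (Gamma (1/4) / Gamma (3/4)) ^ 2"
definition B1 :: real where "B1 = Beta (1/4) (1/2)"
definition B3 :: real where "B3 = Beta (3/4) (1/2)"

lemma gamma_facts: "LL = 4 * B1 / B3" "B1 * B3 = 4 * pi" "B1 > 0" "B3 > 0"
proof -
  have g1: "Gamma (1/4::real) > 0" and g3: "Gamma (3/4::real) > 0" by auto
  have g5: "Gamma (5/4::real) = 1/4 * Gamma (1/4)"
  proof -
    have "(1/4::real) \<notin> \<int>\<^sub>\<le>\<^sub>0" using nonpos_Ints_nonpos[of "1/4::real"] by force
    then show ?thesis using Gamma_plus1[of "1/4::real"] by simp
  qed
  have n1: "Gamma (1/4::real) \<noteq> 0" and n3: "Gamma (3/4::real) \<noteq> 0" using g1 g3 by linarith+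
  have gh: "Gamma (1/2::real) = sqrt pi" by (rule Gamma_one_half_real)
  have b1: "B1 = Gamma (1/4) * sqrt pi / Gamma (3/4)" unfolding B1_def Beta_def gh by simp
  have b3: "B3 = Gamma (3/4) * sqrt pi / Gamma (5/4)" unfolding B3_def Beta_def gh by simp
  show "B1 > 0" "B3 > 0" unfolding b1 b3 using g1 g3 g5 by auto
  show "LL = 4 * B1 / B3" unfolding LL_def b1 b3 g5 using n1 n3
    by (simp add: field_simps power2_eq_square)
  show "B1 * B3 = 4 * pi" unfolding b1 b3 g5 using n1 n3
    by (simp add: field_simps)
qed


definition cc :: real where "cc = 32 / B3"
definition RR :: "nat \<Rightarrow> real" where "RR n = cc * Od n * xi ^ (n+1) * V (n+1)"

lemma RR_pos: "RR n > 0"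
  unfolding RR_def cc_def using gamma_facts(4) Od_pos[of n] xi_eta(3) V_pos[of "n+1"] by simp

lemma xiV1: "xi * V 1 = B1 / 8 - B3 / 4"
  using cert_int V0_beta unfolding B1_def B3_def by (simp add: algebra_simps)

lemma RR0: "RR 0 = LL - 8"
proof -
  have "RR 0 = cc * (xi * V 1)" unfolding RR_def by (simp add: Od_def)
  also have "\<dots> = 4 * B1 / B3 - 8" unfolding xiV1 cc_def using gamma_facts(4) by (simp add: field_simps)
  finally show ?thesis using gamma_facts(1) by simp
qed

lemma RR1: "RR 1 = 11 * LL - 96"
proof -
  have r: "3 * xi * V 2 = 12 * V 1 - eta * V 0" using V_rec[of 0] by (simp add: algebra_simps numeral_eq_Suc)
  have "RR 1 = cc * xi * (3 * xi * V 2)" unfolding RR_def by (simp add: Od_def power2_eq_square algebra_simps numeral_eq_Suc)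
  also have "\<dots> = 12 * (cc * (xi * V 1)) - cc * (xi * eta) * V 0" unfolding r by (simp add: algebra_simps)
  also have "\<dots> = 12 * (cc * (xi * V 1)) - cc * V 0" using xi_eta(1) by simp
  also have "cc * (xi * V 1) = LL - 8" using RR0 unfolding RR_def by (simp add: Od_def)
  also have "cc * V 0 = 4 * B1 / B3" unfolding cc_def using V0_beta gamma_facts(4) unfolding B1_def
    by (simp add: field_simps)
  finally show ?thesis using gamma_facts(1) by simp
qed

lemma RR_rec: "RR (Suc (Suc n)) = 12 * (real n + 2) * RR (Suc n) - (2 * real n + 3)^2 * RR n"
proof -
  have v: "(2 * real n + 5) * xi * V (n+3) = 12 * (real n + 2) * V (n+2) - (2 * real n + 3) * eta * V (n+1)"
    using V_rec[of "n+1"] by (simp add: algebra_simps numeral_eq_Suc)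
  have o2: "Od (Suc (Suc n)) = Od n * (2 * real n + 3) * (2 * real n + 5)"
    by (simp add: Od_Suc algebra_simps)
  have "RR (Suc (Suc n)) = cc * Od n * (2 * real n + 3) * xi ^ (n+2) * ((2 * real n + 5) * xi * V (n+3))"
    unfolding RR_def o2 by (simp add: algebra_simps numeral_eq_Suc)
  also have "\<dots> = 12 * (real n + 2) * (cc * (Od n * (2 * real n + 3)) * xi ^ (n+2) * V (n+2))
       - (2 * real n + 3)^2 * (cc * Od n * (xi ^ (n+2) * eta) * V (n+1))"
    unfolding v by (simp add: algebra_simps power2_eq_square)
  also have "xi ^ (n+2) * eta = xi ^ (n+1)" using xi_eta(1) by (simp add: algebra_simps)
  finally show ?thesis unfolding RR_def by (simp add: Od_Suc numeral_eq_Suc algebra_simps)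
qed

lemma RR_eq: "RR n = LL * qq n - pp n"
proof (induction n rule: less_induct)
  case (less n)
  show ?case
  proof (cases n)
    case 0 then show ?thesis using RR0 pq01 by simp
  next
    case (Suc m)
    show ?thesis
    proof (cases m)
      case 0 then show ?thesis using Suc RR1 pq01 by simp
    next
      case (Suc k)
      have i1: "RR (Suc k) = LL * qq (Suc k) - pp (Suc k)" using less \<open>n = Suc m\<close> Suc by simp
      have i2: "RR k = LL * qq k - pp k" using less \<open>n = Suc m\<close> Suc by simp
      show ?thesis unfolding \<open>n = Suc m\<close> Suc RR_rec pp_rec qq_rec i1 i2
        by (simp add: algebra_simps)
    qed
  qed
qed


lemma contr_lim:
  fixes z u :: "nat \<Rightarrow> real"
  assumes r: "0 < r" "r < 1" and rec: "\<And>n. z (Suc n) = r * z n + r * u n" and u: "u \<longlonglongrightarrow> A"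
  shows "z \<longlonglongrightarrow> r * A / (1 - r)"
proof -
  define y where "y n = z n - r * A / (1 - r)" for n
  have yrec: "y (Suc n) = r * y n + r * (u n - A)" for n
    unfolding y_def rec using r by (simp add: field_simps)
  have "y \<longlonglongrightarrow> 0"
  proof (rule LIMSEQ_I)
    fix e :: real assume e: "0 < e"
    define d where "d = e * (1 - r) / (2 * r)"
    have d: "d > 0" unfolding d_def using e r by simp
    obtain N where N: "\<And>n. n \<ge> N \<Longrightarrow> norm (u n - A) < d" using LIMSEQ_D[OF u d] by blast
    have bound: "\<bar>y (N + k)\<bar> \<le> r ^ k * \<bar>y N\<bar> + e / 2" for k
    proof (induction k)
      case 0 then show ?case using e by simp
    next
      case (Suc k)
      have "\<bar>y (N + Suc k)\<bar> = \<bar>r * y (N + k) + r * (u (N + k) - A)\<bar>" using yrec[of "N+k"] by simp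
      also have "\<dots> \<le> r * \<bar>y (N + k)\<bar> + r * \<bar>u (N + k) - A\<bar>"
      proof -
        have "\<bar>r * y (N + k) + r * (u (N + k) - A)\<bar> \<le> \<bar>r * y (N + k)\<bar> + \<bar>r * (u (N + k) - A)\<bar>"
          by (rule abs_triangle_ineq)
        then show ?thesis using r by (simp add: abs_mult)
      qed
      also have "\<dots> \<le> r * (r ^ k * \<bar>y N\<bar> + e / 2) + r * d"
        using Suc r N[of "N+k"] by (intro add_mono mult_left_mono) auto
      also have "\<dots> = r ^ Suc k * \<bar>y N\<bar> + e / 2"
        unfolding d_def using r by (simp add: field_simps)
      finally show ?case .
    qed
    have "(\<lambda>k. r ^ k * \<bar>y N\<bar>) \<longlonglongrightarrow> 0 * \<bar>y N\<bar>"
      by (intro tendsto_mult LIMSEQ_power_zero tendsto_const) (use r in auto)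
    then obtain K where K: "\<And>k. k \<ge> K \<Longrightarrow> norm (r ^ k * \<bar>y N\<bar> - 0) < e / 2"
      using LIMSEQ_D[of _ 0 "e/2"] e by force
    show "\<exists>no. \<forall>n\<ge>no. norm (y n - 0) < e"
    proof (intro exI allI impI)
      fix n assume n: "n \<ge> N + K"
      define k where "k = n - N"
      have k: "n = N + k" "k \<ge> K" using n unfolding k_def by auto
      have "r ^ k * \<bar>y N\<bar> < e / 2" using K[OF k(2)] r by simp
      then show "norm (y n - 0) < e" using bound[of k] k by simp
    qed
  qed
  then have "(\<lambda>n. y n + r * A / (1 - r)) \<longlonglongrightarrow> 0 + r * A / (1 - r)" by (intro tendsto_intros)
  then show ?thesis unfolding y_def by simp
qed


definition AA :: real where "AA = 16 / (cc^2 * xi^3 * h1^2 * pi)"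

lemma cass: "qq (Suc n) * RR n - qq n * RR (Suc n) = 8 * Od n ^ 2"
  using casorati[of n] unfolding RR_eq by (simp add: algebra_simps)

lemma zrec: "qq (Suc n) / RR (Suc n) * (xi^2) ^ Suc n
   = xi^2 * (qq n / RR n * (xi^2) ^ n) + xi^2 * (8 * Od n ^ 2 / (RR n * RR (Suc n)) * (xi^2) ^ n)"
proof -
  have p: "RR n > 0" "RR (Suc n) > 0" by (rule RR_pos)+
  have "qq (Suc n) / RR (Suc n) = qq n / RR n + 8 * Od n ^ 2 / (RR n * RR (Suc n))"
    unfolding cass[symmetric] using p by (simp add: field_simps)
  then show ?thesis by (simp add: algebra_simps)
qed

lemma u_eq: "8 * Od n ^ 2 / (RR n * RR (Suc n)) * (xi^2) ^ n = 8 / (cc^2 * xi^3 * ((2 * real n + 3) * V (n+1) * V (n+2)))"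
proof -
  define P where "P = (2 * real n + 3) * V (n+1) * V (n+2)"
  define Q where "Q = Od n ^ 2 * xi ^ (2 * n)"
  have x: "xi > 0" by (rule xi_eta(3))
  have Q: "Q \<noteq> 0" unfolding Q_def using Od_pos[of n] x by simp
  have "RR n * RR (Suc n) = (cc^2 * xi^3 * P) * Q"
    unfolding RR_def Od_Suc P_def Q_def by (simp add: power2_eq_square power_add algebra_simps numeral_eq_Suc)
  moreover have "(xi^2) ^ n = xi ^ (2 * n)" by (simp add: power_mult)
  ultimately have "8 * Od n ^ 2 / (RR n * RR (Suc n)) * (xi^2) ^ n = 8 * Q / ((cc^2 * xi^3 * P) * Q)"
    unfolding Q_def by simp
  also have "\<dots> = 8 / (cc^2 * xi^3 * P)" using Q by simp
  finally show ?thesis unfolding P_def .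
qed

lemma u_lim: "(\<lambda>n. 8 * Od n ^ 2 / (RR n * RR (Suc n)) * (xi^2) ^ n) \<longlonglongrightarrow> AA"
proof -
  have "(\<lambda>n. 8 / (cc^2 * xi^3 * ((2 * real n + 3) * V (n+1) * V (n+2)))) \<longlonglongrightarrow> 8 / (cc^2 * xi^3 * (h1^2 * (pi / 2)))"
    using h1pos xi_eta(3) gamma_facts(4) unfolding cc_def
    by (intro tendsto_intros V_prod) auto
  moreover have "8 / (cc^2 * xi^3 * (h1^2 * (pi / 2))) = AA" unfolding AA_def by simp
  ultimately show ?thesis unfolding u_eq by simp
qed

lemma z_lim: "(\<lambda>n. qq n / RR n * (xi^2) ^ n) \<longlonglongrightarrow> xi^2 * AA / (1 - xi^2)"
proof (rule contr_lim[OF _ _ _ u_lim])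
  show "0 < xi^2" using xi_eta(3) by simp
  show "xi^2 < 1" using xi_eta(3,4) by (simp add: power_less_one_iff)
qed (rule zrec)

lemma key_const: "4 * LL * xi^2 * (xi^2 * AA / (1 - xi^2)) = 1"
proof -
  have x: "xi > 0" "xi < 1" using xi_eta by auto
  have x2: "1 - xi^2 > 0" using x by (simp add: power_less_one_iff)
  have h: "h1^2 = 1 / (eta - xi)" unfolding h1_def e1_def using e1_pos by (simp add: power_divide)
  have s1: "AA = (eta - xi) * B3^2 / (64 * xi^3 * pi)"
    unfolding AA_def cc_def h using x gamma_facts(4) e1_pos by (simp add: field_simps power2_eq_square)
  have s2: "4 * LL * xi^2 * (xi^2 * AA / (1 - xi^2)) = (B1 * B3) * (xi * (eta - xi)) / (4 * pi * (1 - xi^2))"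
    unfolding gamma_facts(1) s1 using x x2 gamma_facts(4)
    by (simp add: field_simps power2_eq_square power3_eq_cube)
  have s3: "xi * (eta - xi) = 1 - xi^2" using xi_eta(1) by (simp add: algebra_simps power2_eq_square)
  show ?thesis unfolding s2 s3 gamma_facts(2) using x2 by simp
qed

lemma ratio_lim: "(\<lambda>n. (LL - pp n / qq n) / (4 * LL * (xi^2) ^ Suc n)) \<longlonglongrightarrow> 1"
proof -
  have "(\<lambda>n. inverse (4 * LL * xi^2 * (qq n / RR n * (xi^2) ^ n))) \<longlonglongrightarrow> inverse (4 * LL * xi^2 * (xi^2 * AA / (1 - xi^2)))"
    using key_const by (intro tendsto_intros z_lim) auto
  then have L1: "(\<lambda>n. inverse (4 * LL * xi^2 * (qq n / RR n * (xi^2) ^ n))) \<longlonglongrightarrow> 1"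
    unfolding key_const by simp
  have eq: "inverse (4 * LL * xi^2 * (qq n / RR n * (xi^2) ^ n)) = (LL - pp n / qq n) / (4 * LL * (xi^2) ^ Suc n)" for n
  proof -
    have "LL - pp n / qq n = RR n / qq n" unfolding RR_eq using qq_pos[of n] by (simp add: field_simps)
    then show ?thesis using qq_pos[of n] RR_pos[of n] by (simp add: field_simps)
  qed
  have "(\<lambda>n. inverse (4 * LL * xi^2 * (qq n / RR n * (xi^2) ^ n))) = (\<lambda>n. (LL - pp n / qq n) / (4 * LL * (xi^2) ^ Suc n))"
    by (rule ext) (rule eq)
  with L1 show ?thesis by simp
qed


lemma sqrt2_pow: "(1 + sqrt 2) ^ (4 * n + 4) = eta ^ (2 * n + 2)"
proof -
  have "(1 + sqrt 2) ^ 2 = (eta::real)" unfolding eta_def by (simp add: power2_eq_square algebra_simps)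
  moreover have "(1 + sqrt 2) ^ (4 * n + 4) = ((1 + sqrt (2::real)) ^ 2) ^ (2 * n + 2)"
  proof -
    have "4 * n + 4 = 2 * (2 * n + 2)" by simp
    then show ?thesis by (simp only: power_mult)
  qed
  ultimately show ?thesis by simp
qed

lemma g_eq: "4 * LL / (1 + sqrt 2) ^ (4 * n + 4) = 4 * LL * (xi^2) ^ Suc n"
proof -
  have "1 / eta ^ (2 * n + 2) = xi ^ (2 * n + 2)"
  proof -
    have "xi ^ (2 * n + 2) * eta ^ (2 * n + 2) = 1" by (simp only: power_mult_distrib[symmetric] xi_eta(1) power_one)
    then show ?thesis using xi_eta(5) by (simp add: field_simps)
  qed
  moreover have "(xi^2) ^ Suc n = xi ^ (2 * n + 2)"
  proof -
    have e: "2 * n + 2 = 2 * Suc n" by simp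
    show ?thesis unfolding e by (simp only: power_mult)
  qed
  moreover have "4 * LL / eta ^ (2 * n + 2) = 4 * LL * (1 / eta ^ (2 * n + 2))" by simp
  ultimately show ?thesis unfolding sqrt2_pow by simp
qed

theorem theorem6p1:
  shows "(cf_convergent cf_a cf_b \<longlonglongrightarrow> (Gamma (1/4) / Gamma (3/4)) ^ 2)
       \<and> (\<lambda>n. (Gamma (1/4) / Gamma (3/4)) ^ 2 - cf_convergent cf_a cf_b n)
           \<sim>[sequentially] (\<lambda>n. 4 * (Gamma (1/4) / Gamma (3/4)) ^ 2 / (1 + sqrt 2) ^ (4 * n + 4))"
proof -
  have f: "(\<lambda>n. LL - cf_convergent cf_a cf_b n) = (\<lambda>n. LL - pp n / qq n)" by (simp add: cf_pq)
  have g: "(\<lambda>n. 4 * LL / (1 + sqrt 2) ^ (4 * n + 4)) = (\<lambda>n. 4 * LL * (xi^2) ^ Suc n)" by (simp add: g_eq)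
  have asy: "(\<lambda>n. LL - cf_convergent cf_a cf_b n) \<sim>[sequentially] (\<lambda>n. 4 * LL / (1 + sqrt 2) ^ (4 * n + 4))"
    unfolding f g by (rule asymp_equivI'[OF ratio_lim])
  have g0: "(\<lambda>n. 4 * LL * (xi^2) ^ Suc n) \<longlonglongrightarrow> 4 * LL * 0"
  proof -
    have "(\<lambda>n. (xi^2) ^ n) \<longlonglongrightarrow> 0" using xi_eta(3,4)
      by (intro LIMSEQ_power_zero) (simp add: power_less_one_iff abs_of_pos)
    then have "(\<lambda>n. (xi^2) ^ Suc n) \<longlonglongrightarrow> 0" by (rule LIMSEQ_Suc)
    then show ?thesis by (intro tendsto_intros)
  qed
  have e0: "(\<lambda>n. LL - pp n / qq n) \<longlonglongrightarrow> 0"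
  proof -
    have "(\<lambda>n. (LL - pp n / qq n) / (4 * LL * (xi^2) ^ Suc n) * (4 * LL * (xi^2) ^ Suc n)) \<longlonglongrightarrow> 1 * (4 * LL * 0)"
      by (intro tendsto_mult ratio_lim g0)
    moreover have "4 * LL * (xi^2) ^ Suc n \<noteq> 0" for n
    proof -
      have "LL > 0" unfolding gamma_facts(1) using gamma_facts(3,4) by simp
      then show ?thesis using xi_eta(3) by simp
    qed
    ultimately show ?thesis by simp
  qed
  have conv: "cf_convergent cf_a cf_b \<longlonglongrightarrow> LL"
  proof -
    have "(\<lambda>n. LL - (LL - pp n / qq n)) \<longlonglongrightarrow> LL - 0" by (intro tendsto_intros e0)
    then show ?thesis by (simp add: cf_pq[abs_def])
  qed
  show ?thesis using conv[unfolded LL_def] asy[unfolded LL_def] by (rule conjI)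
qed


end
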